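(* Let $\rho\ge\chi>0$. The linear search strategy driven by a $(\rho,\chi)$-excursion profile $G_\pm$ is $(1+2\rho)$-robust and $(1+2\chi)$-consistent.
   Context: Linear search: an unknown target $T\in\mathbb{R}\setminus\{0\}$; a searcher starts at the origin and performs excursions: in an excursion to a signed endpoint $z\neq0$ it moves from the origin toward $z$, stops immediately if it reaches the target, and otherwise returns to the origin. The cost is the total distance traveled until termination. The prediction is normalized to $+1$. A deterministic strategy is a bi-infinite sequence $(y_n)_{n\in\mathbb{Z}}$ of nonzero reals with $\mathrm{sgn}(y_n)\ne\mathrm{sgn}(y_{n+1})$ and $|y_n|<|y_{n+2}|$ for all $n$; its cost on $T$ is $|T|+2\sum_{n<n_*}|y_n|$ with $n_*=\min\{n:\mathrm{sgn}(y_n)=\mathrm{sgn}(T),\ |y_n|\ge|T|\}$. A randomized strategy $Y$ is a distribution over deterministic strategies with expected cost $\mathrm{cost}_Y(T)$; it is $\rho$-robust if $\mathrm{cost}_Y(T)\le\rho|T|$ for all $T\ne0$, and $\chi$-consistent if $\mathrm{cost}_Y(+1)\le\chi$. For $\rho\ge\chi>0$, a $(\rho,\chi)$-excursion profile is a pair $G_\pm=(G_+,G_-)$ of non-decreasing, left-continuous functions $G_+,G_-:\mathbb{R}\to(0,\infty)$ such that (plus-offset) $G_+(x)\ge1$ for $x>0$ and $G_+(x)<1$ for $x<0$; (robustness) $C_+(x)\le\rho G_+(x)$ and $C_-(x)\le\rho G_-(x)$ for all $x\in\mathbb{R}$; (consistency) $C_+(0)\le\chi$; where $C_+(x):=\int_{-\infty}^{x}G_+(t)\,\mathrm{d}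 t+\int_{-\infty}^{x}G_-(t)\,\mathrm{d} t$ and $C_-(x):=\int_{-\infty}^{x+1}G_+(t)\,\mathrm{d} t+\int_{-\infty}^{x}G_-(t)\,\mathrm{d} t$. The strategy driven by $G_\pm$ uses a single $U\sim\mathrm{Unif}(0,1]$ and the excursion sequence $\cdots\to+G_+(n+U)\to-G_-(n+U)\to+G_+(n+1+U)\to-G_-(n+1+U)\to\cdots$. *)

theory Defs
  imports "HOL-Analysis.Analysis"
begin

text \<open>A deterministic strategy is a bi-infinite sequence y :: int \<Rightarrow> real of signed
  excursion endpoints.\<close>

definition hits :: "(int \<Rightarrow> real) \<Rightarrow> real \<Rightarrow> int \<Rightarrow> bool" where
  "hits y T n \<longleftrightarrow> sgn (y n) = sgn T \<and> \<bar>y n\<bar> \<ge> \<bar>T\<bar>"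

definition nstar :: "(int \<Rightarrow> real) \<Rightarrow> real \<Rightarrow> int" where
  "nstar y T = (THE n. hits y T n \<and> (\<forall>m<n. \<not> hits y T m))"

text \<open>Cost |T| + 2 \<Sum>_{n < n_*} |y_n| (in ennreal, so a divergent sum is infinity).\<close>
definition det_cost :: "(int \<Rightarrow> real) \<Rightarrow> real \<Rightarrow> ennreal" where
  "det_cost y T = ennreal \<bar>T\<bar> + 2 * (\<Sum>\<^sub>\<infinity> n\<in>{..<nstar y T}. ennreal \<bar>y n\<bar>)"

text \<open>The deterministic strategy driven by (G+,G-) for a realization u of U:
  ... \<rightarrow> +G+(n+u) \<rightarrow> -G-(n+u) \<rightarrow> +G+(n+1+u) \<rightarrow> ...,
  indexed as y(2n) = G+(n+u), y(2n+1) = -G-(n+u).\<close>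
definition driven_seq :: "(real \<Rightarrow> real) \<Rightarrow> (real \<Rightarrow> real) \<Rightarrow> real \<Rightarrow> int \<Rightarrow> real" where
  "driven_seq Gp Gm u k =
     (if even k then Gp (real_of_int (k div 2) + u) else - Gm (real_of_int (k div 2) + u))"

definition driven_cost :: "(real \<Rightarrow> real) \<Rightarrow> (real \<Rightarrow> real) \<Rightarrow> real \<Rightarrow> ennreal" where
  "driven_cost Gp Gm T = (\<integral>\<^sup>+ u\<in>{0<..1}. det_cost (driven_seq Gp Gm u) T \<partial>lborel)"

definition robust :: "(real \<Rightarrow> ennreal) \<Rightarrow> real \<Rightarrow> bool" where
  "robust cost rho \<longleftrightarrow> (\<forall>T. T \<noteq> 0 \<longrightarrow> cost T \<le> ennreal (rho * \<bar>T\<bar>))"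

definition consistent :: "(real \<Rightarrow> ennreal) \<Rightarrow> real \<Rightarrow> bool" where
  "consistent cost chi \<longleftrightarrow> cost 1 \<le> ennreal chi"

definition Cplus :: "(real \<Rightarrow> real) \<Rightarrow> (real \<Rightarrow> real) \<Rightarrow> real \<Rightarrow> ennreal" where
  "Cplus Gp Gm x = (\<integral>\<^sup>+ t\<in>{..x}. ennreal (Gp t) \<partial>lborel) + (\<integral>\<^sup>+ t\<in>{..x}. ennreal (Gm t) \<partial>lborel)"

definition Cminus :: "(real \<Rightarrow> real) \<Rightarrow> (real \<Rightarrow> real) \<Rightarrow> real \<Rightarrow> ennreal" where
  "Cminus Gp Gm x = (\<integral>\<^sup>+ t\<in>{..x+1}. ennreal (Gp t) \<partial>lborel) + (\<integral>\<^sup>+ t\<in>{..x}. ennreal (Gm t) \<partial>lborel)"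

definition excursion_profile :: "real \<Rightarrow> real \<Rightarrow> (real \<Rightarrow> real) \<Rightarrow> (real \<Rightarrow> real) \<Rightarrow> bool" where
  "excursion_profile rho chi Gp Gm \<longleftrightarrow>
     mono Gp \<and> mono Gm \<and>
     (\<forall>x. continuous (at_left x) Gp) \<and> (\<forall>x. continuous (at_left x) Gm) \<and>
     (\<forall>x. Gp x > 0) \<and> (\<forall>x. Gm x > 0) \<and>
     (\<forall>x>0. Gp x \<ge> 1) \<and> (\<forall>x<0. Gp x < 1) \<and>
     (\<forall>x. Cplus Gp Gm x \<le> ennreal (rho * Gp x)) \<and>
     (\<forall>x. Cminus Gp Gm x \<le> ennreal (rho * Gm x)) \<and>
     Cplus Gp Gm 0 \<le> ennreal chi"

end

theory Submission
  imports Defs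
begin


lemma count_int_eq_suminf:
  fixes f :: "int \<Rightarrow> ennreal"
  shows "(\<integral>\<^sup>+n. f n \<partial>count_space UNIV) = (\<Sum>i. f (from_nat_into (UNIV::int set) i))"
proof -
  have b: "bij_betw (from_nat_into (UNIV::int set)) UNIV UNIV"
    using bij_betw_from_nat_into[of "UNIV::int set"] by simp
  show ?thesis
    by (simp add: nn_integral_bij_count_space[symmetric, OF b] nn_integral_count_space_nat)
qed

lemma meas_count:
  fixes \<Phi> :: "real \<Rightarrow> ennreal"
  assumes [measurable]: "\<Phi> \<in> borel_measurable borel"
  shows "(\<lambda>u. \<integral>\<^sup>+n. \<Phi> (real_of_int n + u) \<partial>count_space UNIV) \<in> borel_measurable borel"
  unfolding count_int_eq_suminf by measurable

lemma shift_int: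
  fixes \<Phi> :: "real \<Rightarrow> ennreal"
  assumes [measurable]: "\<Phi> \<in> borel_measurable borel"
  shows "(\<integral>\<^sup>+u\<in>{0<..1}. (\<integral>\<^sup>+n. \<Phi> (real_of_int n + u) \<partial>count_space UNIV) \<partial>lborel)
     = (\<integral>\<^sup>+t. \<Phi> t \<partial>lborel)"
proof -
  have "(\<integral>\<^sup>+u\<in>{0<..1}. (\<integral>\<^sup>+n. \<Phi> (real_of_int n + u) \<partial>count_space UNIV) \<partial>lborel)
     = (\<integral>\<^sup>+u. (\<integral>\<^sup>+n. \<Phi> (real_of_int n + u) * indicator {0<..1} u \<partial>count_space UNIV) \<partial>lborel)"
    by (simp add: nn_integral_multc)
  also have "\<dots> = (\<integral>\<^sup>+n. (\<integral>\<^sup>+u. \<Phi> (real_of_int n + u) * indicator {0<..1} u \<partial>lborel) \<partial>count_space UNIV)"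
    by (rule nn_integral_count_space_nn_integral) auto
  also have "\<dots> = (\<integral>\<^sup>+n. (\<integral>\<^sup>+t. \<Phi> t * indicator {real_of_int n<..real_of_int n+1} t \<partial>lborel) \<partial>count_space UNIV)"
  proof (rule nn_integral_cong)
    fix n :: int
    have "(\<integral>\<^sup>+t. \<Phi> t * indicator {real_of_int n<..real_of_int n+1} t \<partial>lborel)
       = (\<integral>\<^sup>+x. \<Phi> (real_of_int n + 1 * x) * indicator {real_of_int n<..real_of_int n+1} (real_of_int n + 1 * x) \<partial>lborel)"
      using nn_integral_real_affine[of "\<lambda>t. \<Phi> t * indicator {real_of_int n<..real_of_int n+1} t" 1 "real_of_int n"]
      by simp
    also have "\<dots> = (\<integral>\<^sup>+u. \<Phi> (real_of_int n + u) * indicator {0<..1} u \<partial>lborel)"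
      by (intro nn_integral_cong) (auto simp: indicator_def)
    finally show "(\<integral>\<^sup>+u. \<Phi> (real_of_int n + u) * indicator {0<..1} u \<partial>lborel) = (\<integral>\<^sup>+t. \<Phi> t * indicator {real_of_int n<..real_of_int n+1} t \<partial>lborel)"
      by simp
  qed
  also have "\<dots> = (\<integral>\<^sup>+t. (\<integral>\<^sup>+n. \<Phi> t * indicator {real_of_int n<..real_of_int n+1} t \<partial>count_space UNIV) \<partial>lborel)"
    by (rule nn_integral_count_space_nn_integral[symmetric]) auto
  also have "\<dots> = (\<integral>\<^sup>+t. \<Phi> t \<partial>lborel)"
  proof (rule nn_integral_cong)
    fix t :: real
    have "(\<integral>\<^sup>+n. \<Phi> t * indicator {real_of_int n<..real_of_int n+1} t \<partial>count_space UNIV)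
       = (\<Sum>n\<in>{\<lceil>t\<rceil> - 1}. \<Phi> t * indicator {real_of_int n<..real_of_int n+1} t)"
    proof (rule nn_integral_count_space')
      fix n :: int assume "n \<notin> {\<lceil>t\<rceil> - 1}"
      then show "\<Phi> t * indicator {real_of_int n<..real_of_int n+1} t = 0"
      proof (cases "real_of_int n < t \<and> t \<le> real_of_int n + 1")
        case True
        then have "\<lceil>t\<rceil> = n + 1" by (intro ceiling_unique) auto
        then show ?thesis using \<open>n \<notin> {\<lceil>t\<rceil> - 1}\<close> by simp
      qed (auto simp: indicator_def)
    qed auto
    also have "\<dots> = \<Phi> t"
      by (auto simp: indicator_def) linarith+
    finally show "(\<integral>\<^sup>+n. \<Phi> t * indicator {real_of_int n<..real_of_int n+1} t \<partial>count_space UNIV) = \<Phi> t" .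
  qed
  finally show ?thesis .
qed



lemma nstar_props:
  assumes hm: "hits y T m" and lb: "\<And>n. hits y T n \<Longrightarrow> L \<le> n"
  shows "hits y T (nstar y T) \<and> (\<forall>k<nstar y T. \<not> hits y T k)"
proof -
  define S where "S = {n. hits y T n} \<inter> {L..m}"
  have fin: "finite S" unfolding S_def by auto
  have ne: "S \<noteq> {}" using hm lb[OF hm] unfolding S_def by auto
  define N where "N = Min S"
  have NS: "N \<in> S" unfolding N_def using fin ne by simp
  have hN: "hits y T N" using NS unfolding S_def by auto
  have lt: "\<forall>k<N. \<not> hits y T k"
  proof (intro allI impI notI)
    fix k assume "k < N" "hits y T k"
    then have "k \<in> S" using NS lb[of k] unfolding S_def by auto
    then have "N \<le> k" unfolding N_def using fin by simp
    with \<open>k < N\<close> show False by simp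
  qed
  have "nstar y T = N"
    unfolding nstar_def
  proof (rule the_equality)
    show "hits y T N \<and> (\<forall>m<N. \<not> hits y T m)" using hN lt by blast
  next
    fix n assume "hits y T n \<and> (\<forall>m<n. \<not> hits y T m)"
    then show "n = N" using hN lt by (meson linorder_neqE)
  qed
  then show ?thesis using hN lt by simp
qed

lemma finite_sum_le_count:
  fixes f :: "int \<Rightarrow> ennreal" and g :: "int \<Rightarrow> ennreal" and p :: "int \<Rightarrow> int"
  assumes "finite F" and "\<And>n. (\<Sum>k\<in>{k\<in>F. p k = n}. f k) \<le> g n"
  shows "(\<Sum>k\<in>F. f k) \<le> (\<integral>\<^sup>+n. g n \<partial>count_space UNIV)"
proof -
  have "(\<Sum>k\<in>F. f k) = (\<Sum>n\<in>p ` F. \<Sum>k\<in>{k\<in>F. p k = n}. f k)"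
    by (rule sum.image_gen[OF assms(1)])
  also have "\<dots> \<le> (\<Sum>n\<in>p ` F. g n)"
    by (intro sum_mono assms(2))
  also have "\<dots> = (\<integral>\<^sup>+n. g n \<partial>count_space (p ` F))"
    using assms(1) by (simp add: nn_integral_count_space_finite)
  also have "\<dots> = (\<integral>\<^sup>+n. g n * indicator (p ` F) n \<partial>count_space UNIV)"
    by (rule nn_integral_count_space_indicator) simp
  also have "\<dots> \<le> (\<integral>\<^sup>+n. g n \<partial>count_space UNIV)"
    by (intro nn_integral_mono) (auto simp: indicator_def)
  finally show ?thesis .
qed

lemma infsum_le_count:
  fixes f :: "int \<Rightarrow> ennreal"
  assumes "\<And>F. finite F \<Longrightarrow> F \<subseteq> A \<Longrightarrow> (\<Sum>k\<in>F. f k) \<le> B"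
  shows "(\<Sum>\<^sub>\<infinity> k\<in>A. f k) \<le> B"
  by (subst nonneg_infsum_complete) (auto intro!: SUP_least assms)



lemma driven_even: "driven_seq Gp Gm u (2*n) = Gp (real_of_int n + u)"
  by (simp add: driven_seq_def)
lemma driven_odd: "driven_seq Gp Gm u (2*n+1) = - Gm (real_of_int n + u)"
  by (simp add: driven_seq_def)

lemma det_pos:
  assumes gp: "\<And>x. Gp x > 0" and gm: "\<And>x. Gm x > 0" and T: "T > 0" and mono: "mono Gp"
    and x1: "Gp x1 \<ge> T" and x0: "Gp x0 < T"
  shows "det_cost (driven_seq Gp Gm u) T \<le> ennreal T + 2 *
     (\<integral>\<^sup>+n. (ennreal (Gp (real_of_int n + u)) + ennreal (Gm (real_of_int n + u)))
        * indicator {t. Gp t < T} (real_of_int n + u) \<partial>count_space UNIV)"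
proof -
  define y where "y = driven_seq Gp Gm u"
  have hit_iff: "hits y T k \<longleftrightarrow> even k \<and> Gp (real_of_int (k div 2) + u) \<ge> T" for k
  proof (cases "even k")
    case True
    then obtain n where "k = 2*n" by blast
    then show ?thesis using gp[of "real_of_int n + u"] T
      by (simp add: hits_def y_def driven_even)
  next
    case False
    then obtain n where "k = 2*n+1" using oddE by blast
    then show ?thesis using gm[of "real_of_int n + u"] T
      by (simp add: hits_def y_def driven_odd)
  qed
  define n1 where "n1 = \<lceil>x1 - u\<rceil>"
  have "x1 \<le> real_of_int n1 + u"
    using le_of_int_ceiling[of "x1-u"] unfolding n1_def by linarith
  then have "Gp x1 \<le> Gp (real_of_int n1 + u)"
    using mono unfolding mono_def by blast
  then have h1: "hits y T (2*n1)" using x1 by (simp add: hit_iff)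
  define L where "L = 2 * \<lfloor>x0 - u\<rfloor>"
  have lb: "L \<le> k" if "hits y T k" for k
  proof -
    have ev: "even k" and ge: "Gp (real_of_int (k div 2) + u) \<ge> T" using that by (auto simp: hit_iff)
    have "real_of_int (k div 2) + u > x0"
    proof (rule ccontr)
      assume "\<not> ?thesis"
      then have "Gp (real_of_int (k div 2) + u) \<le> Gp x0" using mono unfolding mono_def by simp
      with ge x0 show False by simp
    qed
    then have "\<lfloor>x0 - u\<rfloor> \<le> k div 2" by linarith
    then show ?thesis using ev unfolding L_def by auto
  qed
  from nstar_props[of y T "2*n1" L, OF h1 lb]
  have nohit: "\<And>k. k < nstar y T \<Longrightarrow> \<not> hits y T k" by blast
  let ?\<Phi> = "\<lambda>n. (ennreal (Gp (real_of_int n + u)) + ennreal (Gm (real_of_int n + u)))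
        * indicator {t. Gp t < T} (real_of_int n + u)"
  have "(\<Sum>\<^sub>\<infinity> k\<in>{..<nstar y T}. ennreal \<bar>y k\<bar>) \<le> (\<integral>\<^sup>+n. ?\<Phi> n \<partial>count_space UNIV)"
  proof (rule infsum_le_count)
    fix F assume F: "finite F" "F \<subseteq> {..<nstar y T}"
    show "(\<Sum>k\<in>F. ennreal \<bar>y k\<bar>) \<le> (\<integral>\<^sup>+n. ?\<Phi> n \<partial>count_space UNIV)"
    proof (rule finite_sum_le_count[where p="\<lambda>k. k div 2"])
      fix n
      show "(\<Sum>k\<in>{k\<in>F. k div 2 = n}. ennreal \<bar>y k\<bar>) \<le> ?\<Phi> n"
      proof (cases "{k\<in>F. k div 2 = n} = {}")
        case True
        have "(\<Sum>k\<in>{k\<in>F. k div 2 = n}. ennreal \<bar>y k\<bar>) = 0" by (simp only: True sum.empty)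
        then show ?thesis by simp
      next
        case False
        then obtain k0 where k0: "k0 \<in> F" "k0 div 2 = n" by blast
        then have "2*n < nstar y T" using F by auto
        then have "\<not> hits y T (2*n)" by (rule nohit)
        then have lt: "Gp (real_of_int n + u) < T" by (simp add: hit_iff)
        have sub: "{k\<in>F. k div 2 = n} \<subseteq> {2*n, 2*n+1}" by auto
        have "(\<Sum>k\<in>{k\<in>F. k div 2 = n}. ennreal \<bar>y k\<bar>) \<le> (\<Sum>k\<in>{2*n, 2*n+1}. ennreal \<bar>y k\<bar>)"
          by (rule sum_mono2[OF _ sub]) auto
        also have "\<dots> = ennreal (Gp (real_of_int n + u)) + ennreal (Gm (real_of_int n + u))"
          using gp[of "real_of_int n + u"] gm[of "real_of_int n + u"]
          by (simp add: y_def driven_even driven_odd)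
        also have "\<dots> = ?\<Phi> n" using lt by simp
        finally show ?thesis .
      qed
    qed (use F in auto)
  qed
  then show ?thesis
    unfolding det_cost_def y_def[symmetric] using T
    by (intro add_mono mult_left_mono) auto
qed



lemma det_neg:
  assumes gp: "\<And>x. Gp x > 0" and gm: "\<And>x. Gm x > 0" and T: "T < 0" and mono: "mono Gm"
    and x1: "Gm x1 \<ge> - T" and x0: "Gm x0 < - T"
  shows "det_cost (driven_seq Gp Gm u) T \<le> ennreal (- T) + 2 *
     (\<integral>\<^sup>+n. (ennreal (Gp (real_of_int n + u + 1)) + ennreal (Gm (real_of_int n + u)))
        * indicator {t. Gm t < - T} (real_of_int n + u) \<partial>count_space UNIV)"
proof -
  define y where "y = driven_seq Gp Gm u"
  have hit_iff: "hits y T k \<longleftrightarrow> odd k \<and> Gm (real_of_int (k div 2) + u) \<ge> - T" for k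
  proof (cases "even k")
    case True
    then obtain n where "k = 2*n" by blast
    then show ?thesis using gp[of "real_of_int n + u"] T
      by (simp add: hits_def y_def driven_even)
  next
    case False
    then obtain n where "k = 2*n+1" using oddE by blast
    then show ?thesis using gm[of "real_of_int n + u"] T
      by (simp add: hits_def y_def driven_odd)
  qed
  define n1 where "n1 = \<lceil>x1 - u\<rceil>"
  have "x1 \<le> real_of_int n1 + u"
    using le_of_int_ceiling[of "x1-u"] unfolding n1_def by linarith
  then have "Gm x1 \<le> Gm (real_of_int n1 + u)"
    using mono unfolding mono_def by blast
  then have h1: "hits y T (2*n1+1)" using x1 by (simp add: hit_iff)
  define L where "L = 2 * \<lfloor>x0 - u\<rfloor>"
  have lb: "L \<le> k" if "hits y T k" for k
  proof -
    have ge: "Gm (real_of_int (k div 2) + u) \<ge> - T" using that by (auto simp: hit_iff)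
    have "real_of_int (k div 2) + u > x0"
    proof (rule ccontr)
      assume "\<not> ?thesis"
      then have "Gm (real_of_int (k div 2) + u) \<le> Gm x0" using mono unfolding mono_def by simp
      with ge x0 show False by simp
    qed
    then have "\<lfloor>x0 - u\<rfloor> \<le> k div 2" by linarith
    then show ?thesis unfolding L_def by auto
  qed
  from nstar_props[of y T "2*n1+1" L, OF h1 lb]
  have nohit: "\<And>k. k < nstar y T \<Longrightarrow> \<not> hits y T k" by blast
  let ?\<Phi> = "\<lambda>n. (ennreal (Gp (real_of_int n + u + 1)) + ennreal (Gm (real_of_int n + u)))
        * indicator {t. Gm t < - T} (real_of_int n + u)"
  have "(\<Sum>\<^sub>\<infinity> k\<in>{..<nstar y T}. ennreal \<bar>y k\<bar>) \<le> (\<integral>\<^sup>+n. ?\<Phi> n \<partial>count_space UNIV)"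
  proof (rule infsum_le_count)
    fix F assume F: "finite F" "F \<subseteq> {..<nstar y T}"
    show "(\<Sum>k\<in>F. ennreal \<bar>y k\<bar>) \<le> (\<integral>\<^sup>+n. ?\<Phi> n \<partial>count_space UNIV)"
    proof (rule finite_sum_le_count[where p="\<lambda>k. (k - 1) div 2"])
      fix n
      show "(\<Sum>k\<in>{k\<in>F. (k - 1) div 2 = n}. ennreal \<bar>y k\<bar>) \<le> ?\<Phi> n"
      proof (cases "{k\<in>F. (k - 1) div 2 = n} = {}")
        case True
        have "(\<Sum>k\<in>{k\<in>F. (k - 1) div 2 = n}. ennreal \<bar>y k\<bar>) = 0" by (simp only: True sum.empty)
        then show ?thesis by simp
      next
        case False
        then obtain k0 where k0: "k0 \<in> F" "(k0 - 1) div 2 = n" by blast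
        then have "2*n+1 < nstar y T" using F by auto
        then have "\<not> hits y T (2*n+1)" by (rule nohit)
        then have lt: "Gm (real_of_int n + u) < - T" by (simp add: hit_iff)
        have sub: "{k\<in>F. (k - 1) div 2 = n} \<subseteq> {2*n+1, 2*(n+1)}" by auto
        have "(\<Sum>k\<in>{k\<in>F. (k - 1) div 2 = n}. ennreal \<bar>y k\<bar>) \<le> (\<Sum>k\<in>{2*n+1, 2*(n+1)}. ennreal \<bar>y k\<bar>)"
          by (rule sum_mono2[OF _ sub]) auto
        also have "\<dots> = ennreal (Gp (real_of_int n + u + 1)) + ennreal (Gm (real_of_int n + u))"
        proof -
          have "y (2*(n+1)) = Gp (real_of_int n + u + 1)"
            unfolding y_def driven_even by (simp add: algebra_simps)
          moreover have "y (2*n+1) = - Gm (real_of_int n + u)"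
            unfolding y_def driven_odd by simp
          moreover have "2*n+1 \<noteq> 2*(n+1)" by simp
          ultimately show ?thesis
            using gp[of "real_of_int n + u + 1"] gm[of "real_of_int n + u"]
            by (simp add: add.commute)
        qed
        also have "\<dots> = ?\<Phi> n" using lt by simp
        finally show ?thesis .
      qed
    qed (use F in auto)
  qed
  then show ?thesis
    unfolding det_cost_def y_def[symmetric] using T
    by (intro add_mono mult_left_mono) auto
qed



lemma leftcont_le:
  fixes f :: "real \<Rightarrow> real"
  assumes "continuous (at_left a) f" and "\<And>t. t < a \<Longrightarrow> f t \<le> T"
  shows "f a \<le> T"
proof -
  have "(f \<longlongrightarrow> f a) (at_left a)" using assms(1) by (simp add: continuous_within)
  moreover have "eventually (\<lambda>t. f t \<le> T) (at_left a)"
    using assms(2) by (auto simp: eventually_at_left_real[of "a-1"] intro!: eventually_at_leftI[of "a-1"])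
  ultimately show ?thesis
    by (rule tendsto_upperbound) (simp add: trivial_limit_at_left_real)
qed

lemma int_ge_x:
  fixes g :: "real \<Rightarrow> real"
  assumes "\<And>t. t > 0 \<Longrightarrow> g t \<ge> 1" "x > 0"
  shows "ennreal x \<le> (\<integral>\<^sup>+t\<in>{..x}. ennreal (g t) \<partial>lborel)"
proof -
  have "ennreal x = (\<integral>\<^sup>+t. indicator {0<..x} t \<partial>lborel)"
    using assms(2) by simp
  also have "\<dots> \<le> (\<integral>\<^sup>+t\<in>{..x}. ennreal (g t) \<partial>lborel)"
    using assms(1) by (intro nn_integral_mono) (auto simp: indicator_def)
  finally show ?thesis .
qed

lemma big_int:
  fixes f :: "real \<Rightarrow> real"
  assumes "\<And>t. f t \<ge> T" "T > 0" "(\<integral>\<^sup>+t\<in>{..0}. ennreal (f t) \<partial>lborel) \<le> ennreal B"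
  shows False
proof -
  define N where "N = \<bar>B\<bar> / T + 1"
  have N: "N > 0" unfolding N_def using assms(2) by (simp add: add_nonneg_pos)
  have "ennreal (T * N) = (\<integral>\<^sup>+t. ennreal T * indicator {-N<..0} t \<partial>lborel)"
    using N assms(2) by (simp add: nn_integral_cmult ennreal_mult)
  also have "\<dots> \<le> (\<integral>\<^sup>+t\<in>{..0}. ennreal (f t) \<partial>lborel)"
    using assms(1) by (intro nn_integral_mono) (auto simp: indicator_def ennreal_leI)
  also have "\<dots> \<le> ennreal B" by (rule assms(3))
  finally have le: "ennreal (T * N) \<le> ennreal B" .
  have TN: "T * N > 0" using N assms(2) by simp
  have "T * N \<le> B"
  proof (cases "B \<ge> 0")
    case True then show ?thesis using le by simp
  next
    case False
    then have "ennreal B = 0" by (simp add: ennreal_neg)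
    then show ?thesis using le TN by auto
  qed
  moreover have "T * N = \<bar>B\<bar> + T" unfolding N_def using assms(2) by (simp add: field_simps)
  ultimately show False using assms(2) by linarith
qed



lemma assemble:
  fixes \<Phi> :: "real \<Rightarrow> ennreal"
  assumes [measurable]: "\<Phi> \<in> borel_measurable borel"
    and det: "\<And>u. det_cost (driven_seq Gp Gm u) T \<le> ennreal c + 2 * (\<integral>\<^sup>+n. \<Phi> (real_of_int n + u) \<partial>count_space UNIV)"
    and int: "(\<integral>\<^sup>+t. \<Phi> t \<partial>lborel) \<le> ennreal B" and c: "c \<ge> 0" and B: "B \<ge> 0"
  shows "driven_cost Gp Gm T \<le> ennreal (c + 2 * B)"
proof -
  have m: "(\<lambda>u. \<integral>\<^sup>+n. \<Phi> (real_of_int n + u) \<partial>count_space UNIV) \<in> borel_measurable borel"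
    by (rule meas_count) simp
  have "driven_cost Gp Gm T \<le> (\<integral>\<^sup>+u\<in>{0<..1}. (ennreal c + 2 * (\<integral>\<^sup>+n. \<Phi> (real_of_int n + u) \<partial>count_space UNIV)) \<partial>lborel)"
    unfolding driven_cost_def by (intro nn_integral_mono mult_right_mono det) simp
  also have "\<dots> = (\<integral>\<^sup>+(u::real). ennreal c * indicator {0<..1} u + 2 * ((\<integral>\<^sup>+n. \<Phi> (real_of_int n + u) \<partial>count_space UNIV) * indicator {0<..1} u) \<partial>lborel)"
    by (intro nn_integral_cong) (simp add: distrib_right mult.assoc)
  also have "\<dots> = (\<integral>\<^sup>+(u::real). ennreal c * indicator {0<..1} u \<partial>lborel) + (\<integral>\<^sup>+u. 2 * ((\<integral>\<^sup>+n. \<Phi> (real_of_int n + u) \<partial>count_space UNIV) * indicator {0<..1} u) \<partial>lborel)"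
    by (subst nn_integral_add) (use m in auto)
  also have "\<dots> = ennreal c + 2 * (\<integral>\<^sup>+t. \<Phi> t \<partial>lborel)"
  proof -
    have e1: "(\<integral>\<^sup>+(u::real). ennreal c * indicator {0<..1} u \<partial>lborel) = ennreal c"
      by (simp add: nn_integral_cmult_indicator)
    have e2: "(\<integral>\<^sup>+u. 2 * ((\<integral>\<^sup>+n. \<Phi> (real_of_int n + u) \<partial>count_space UNIV) * indicator {0<..1} u) \<partial>lborel)
        = 2 * (\<integral>\<^sup>+u. ((\<integral>\<^sup>+n. \<Phi> (real_of_int n + u) \<partial>count_space UNIV) * indicator {0<..1} u) \<partial>lborel)"
      by (rule nn_integral_cmult) (use m in auto)
    show ?thesis unfolding e1 e2 shift_int[OF assms(1)] ..
  qed
  also have "\<dots> \<le> ennreal c + 2 * ennreal B"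
    using int by (intro add_left_mono mult_left_mono) auto
  also have "\<dots> = ennreal (c + 2 * B)"
    using c B by (simp add: ennreal_plus[symmetric] ennreal_mult)
  finally show ?thesis .
qed



lemma thresh:
  fixes g :: "real \<Rightarrow> real"
  assumes mono: "mono g" and lc: "\<And>x. continuous (at_left x) g" and x1: "g x1 \<ge> T" and x0: "g x0 < T"
  shows "\<exists>a. {t. g t < T} \<subseteq> {..a} \<and> g a \<le> T"
proof -
  define S where "S = {t. g t < T}"
  have bdd: "bdd_above S"
  proof (rule bdd_aboveI)
    fix t assume "t \<in> S"
    show "t \<le> x1"
    proof (rule ccontr)
      assume "\<not> t \<le> x1"
      then have "g x1 \<le> g t" using mono by (simp add: monoD)
      with x1 \<open>t \<in> S\<close> show False unfolding S_def by simp
    qed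
  qed
  have ne: "S \<noteq> {}" using x0 unfolding S_def by auto
  define a where "a = Sup S"
  have sub: "S \<subseteq> {..a}" unfolding a_def using bdd by (auto intro: cSup_upper)
  have "g a \<le> T"
  proof (rule leftcont_le[OF lc])
    fix t assume "t < a"
    then obtain s where "s \<in> S" "t < s" unfolding a_def using less_cSup_iff[OF ne bdd] by blast
    then have "g t \<le> g s" using mono by (simp add: monoD)
    with \<open>s \<in> S\<close> show "g t \<le> T" unfolding S_def by simp
  qed
  then show ?thesis using sub unfolding S_def by blast
qed

lemma int_sub_pos:
  assumes [measurable]: "Gp \<in> borel_measurable borel" "Gm \<in> borel_measurable borel"
    and S: "S \<subseteq> {..a}"
  shows "(\<integral>\<^sup>+t. (ennreal (Gp t) + ennreal (Gm t)) * indicator S t \<partial>lborel) \<le> Cplus Gp Gm a"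
proof -
  have "(\<integral>\<^sup>+t. (ennreal (Gp t) + ennreal (Gm t)) * indicator S t \<partial>lborel)
      \<le> (\<integral>\<^sup>+t. ennreal (Gp t) * indicator {..a} t + ennreal (Gm t) * indicator {..a} t \<partial>lborel)"
    using S by (intro nn_integral_mono) (auto simp: indicator_def)
  also have "\<dots> = Cplus Gp Gm a"
    unfolding Cplus_def by (rule nn_integral_add) auto
  finally show ?thesis .
qed

lemma int_sub_neg:
  assumes [measurable]: "Gp \<in> borel_measurable borel" "Gm \<in> borel_measurable borel"
    and S: "S \<subseteq> {..b}"
  shows "(\<integral>\<^sup>+t. (ennreal (Gp (t+1)) + ennreal (Gm t)) * indicator S t \<partial>lborel) \<le> Cminus Gp Gm b"
proof -
  have "(\<integral>\<^sup>+t. (ennreal (Gp (t+1)) + ennreal (Gm t)) * indicator S t \<partial>lborel)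
      \<le> (\<integral>\<^sup>+t. ennreal (Gp (1 + 1 * t)) * indicator {..b+1} (1 + 1 * t) + ennreal (Gm t) * indicator {..b} t \<partial>lborel)"
    using S by (intro nn_integral_mono) (auto simp: indicator_def add.commute)
  also have "\<dots> = (\<integral>\<^sup>+t. ennreal (Gp (1 + 1 * t)) * indicator {..b+1} (1 + 1 * t) \<partial>lborel) + (\<integral>\<^sup>+t. ennreal (Gm t) * indicator {..b} t \<partial>lborel)"
    by (rule nn_integral_add) auto
  also have "(\<integral>\<^sup>+t. ennreal (Gp (1 + 1 * t)) * indicator {..b+1} (1 + 1 * t) \<partial>lborel) = (\<integral>\<^sup>+t. ennreal (Gp t) * indicator {..b+1} t \<partial>lborel)"
    using nn_integral_real_affine[of "\<lambda>t. ennreal (Gp t) * indicator {..b+1} t" 1 1] by simp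
  finally show ?thesis unfolding Cminus_def .
qed



theorem lemma4:
  fixes rho chi :: real and Gp Gm :: "real \<Rightarrow> real"
  assumes "rho \<ge> chi" and "chi > 0"
    and "excursion_profile rho chi Gp Gm"
  shows "robust (driven_cost Gp Gm) (1 + 2 * rho) \<and> consistent (driven_cost Gp Gm) (1 + 2 * chi)"
proof -
  note P = assms(3)[unfolded excursion_profile_def]
  have rho: "rho > 0" using assms(1,2) by simp
  have mp: "mono Gp" and mm: "mono Gm" using P by auto
  have lcp: "\<And>x. continuous (at_left x) Gp" and lcm: "\<And>x. continuous (at_left x) Gm" using P by auto
  have gp: "\<And>x. Gp x > 0" and gm: "\<And>x. Gm x > 0" using P by auto
  have gp1: "\<And>x. x > 0 \<Longrightarrow> Gp x \<ge> 1" and gp0: "\<And>x. x < 0 \<Longrightarrow> Gp x < 1" using P by auto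
  have Cp: "\<And>x. Cplus Gp Gm x \<le> ennreal (rho * Gp x)" and Cm: "\<And>x. Cminus Gp Gm x \<le> ennreal (rho * Gm x)"
    and C0: "Cplus Gp Gm 0 \<le> ennreal chi" using P by auto
  have [measurable]: "Gp \<in> borel_measurable borel" "Gm \<in> borel_measurable borel"
    using mp mm by (auto intro: borel_measurable_mono)

  have a1: "\<exists>x. Gp x \<ge> T" for T
  proof (rule ccontr)
    assume "\<not> ?thesis"
    then have lt: "\<And>x. Gp x < T" by (simp add: not_le)
    define x where "x = \<bar>rho * T\<bar> + 1"
    have x: "x > 0" unfolding x_def by simp
    have "ennreal x \<le> (\<integral>\<^sup>+t\<in>{..x}. ennreal (Gp t) \<partial>lborel)" by (rule int_ge_x[OF gp1 x])
    also have "\<dots> \<le> Cplus Gp Gm x" unfolding Cplus_def by simp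
    also have "\<dots> \<le> ennreal (rho * Gp x)" by (rule Cp)
    finally have "x \<le> rho * Gp x" using rho gp[of x] by (simp add: ennreal_le_iff)
    moreover have "rho * Gp x \<le> rho * T" using lt[of x] rho by simp
    ultimately show False unfolding x_def by linarith
  qed
  have b1: "\<exists>x. Gm x \<ge> T" for T
  proof (rule ccontr)
    assume "\<not> ?thesis"
    then have lt: "\<And>x. Gm x < T" by (simp add: not_le)
    define x where "x = \<bar>rho * T\<bar>"
    have x: "x + 1 > 0" unfolding x_def by simp
    have "ennreal (x + 1) \<le> (\<integral>\<^sup>+t\<in>{..x+1}. ennreal (Gp t) \<partial>lborel)" by (rule int_ge_x[OF gp1 x])
    also have "\<dots> \<le> Cminus Gp Gm x" unfolding Cminus_def by simp
    also have "\<dots> \<le> ennreal (rho * Gm x)" by (rule Cm)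
    finally have "x + 1 \<le> rho * Gm x" using rho gm[of x] by (simp add: ennreal_le_iff)
    moreover have "rho * Gm x \<le> rho * T" using lt[of x] rho by simp
    ultimately show False unfolding x_def by linarith
  qed
  have c1: "\<exists>x. Gp x < T" if T: "T > 0" for T
  proof (rule ccontr)
    assume "\<not> ?thesis"
    then have ge: "\<And>x. Gp x \<ge> T" by (simp add: not_less)
    have "(\<integral>\<^sup>+t\<in>{..0}. ennreal (Gp t) \<partial>lborel) \<le> Cplus Gp Gm 0" unfolding Cplus_def by simp
    also have "\<dots> \<le> ennreal (rho * Gp 0)" by (rule Cp)
    finally show False by (rule big_int[OF ge T])
  qed
  have d1: "\<exists>x. Gm x < T" if T: "T > 0" for T
  proof (rule ccontr)
    assume "\<not> ?thesis"
    then have ge: "\<And>x. Gm x \<ge> T" by (simp add: not_less)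
    have "(\<integral>\<^sup>+t\<in>{..0}. ennreal (Gm t) \<partial>lborel) \<le> Cminus Gp Gm 0" unfolding Cminus_def by simp
    also have "\<dots> \<le> ennreal (rho * Gm 0)" by (rule Cm)
    finally show False by (rule big_int[OF ge T])
  qed

  have pos: "driven_cost Gp Gm T \<le> ennreal (T + 2 * (rho * T))" if T: "T > 0" for T
  proof -
    obtain x1 where x1: "Gp x1 \<ge> T" using a1 by blast
    obtain x0 where x0: "Gp x0 < T" using c1[OF T] by blast
    obtain a where a: "{t. Gp t < T} \<subseteq> {..a}" "Gp a \<le> T" using thresh[OF mp lcp x1 x0] by blast
    show ?thesis
    proof (rule assemble[where \<Phi>="\<lambda>t. (ennreal (Gp t) + ennreal (Gm t)) * indicator {t. Gp t < T} t"])
      show "(\<lambda>t. (ennreal (Gp t) + ennreal (Gm t)) * indicator {t. Gp t < T} t) \<in> borel_measurable borel"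
        by measurable
      show "det_cost (driven_seq Gp Gm u) T \<le> ennreal T + 2 * (\<integral>\<^sup>+n. (ennreal (Gp (real_of_int n + u)) + ennreal (Gm (real_of_int n + u))) * indicator {t. Gp t < T} (real_of_int n + u) \<partial>count_space UNIV)" for u
        by (rule det_pos[OF gp gm T mp x1 x0])
      have "(\<integral>\<^sup>+t. (ennreal (Gp t) + ennreal (Gm t)) * indicator {t. Gp t < T} t \<partial>lborel) \<le> Cplus Gp Gm a"
        by (rule int_sub_pos) (use a in auto)
      also have "\<dots> \<le> ennreal (rho * Gp a)" by (rule Cp)
      also have "\<dots> \<le> ennreal (rho * T)" using a(2) rho by (intro ennreal_leI) simp
      finally show "(\<integral>\<^sup>+t. (ennreal (Gp t) + ennreal (Gm t)) * indicator {t. Gp t < T} t \<partial>lborel) \<le> ennreal (rho * T)" .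
    qed (use T rho in auto)
  qed
  have neg: "driven_cost Gp Gm T \<le> ennreal (- T + 2 * (rho * (- T)))" if T: "T < 0" for T
  proof -
    obtain x1 where x1: "Gm x1 \<ge> - T" using b1 by blast
    obtain x0 where x0: "Gm x0 < - T" using d1[of "- T"] T by auto
    obtain b where b: "{t. Gm t < - T} \<subseteq> {..b}" "Gm b \<le> - T" using thresh[OF mm lcm x1 x0] by blast
    show ?thesis
    proof (rule assemble[where \<Phi>="\<lambda>t. (ennreal (Gp (t + 1)) + ennreal (Gm t)) * indicator {t. Gm t < - T} t"])
      show "(\<lambda>t. (ennreal (Gp (t + 1)) + ennreal (Gm t)) * indicator {t. Gm t < - T} t) \<in> borel_measurable borel"
        by measurable
      show "det_cost (driven_seq Gp Gm u) T \<le> ennreal (- T) + 2 * (\<integral>\<^sup>+n. (ennreal (Gp (real_of_int n + u + 1)) + ennreal (Gm (real_of_int n + u))) * indicator {t. Gm t < - T} (real_of_int n + u) \<partial>count_space UNIV)" for u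
        by (rule det_neg[OF gp gm T mm x1 x0])
      have "(\<integral>\<^sup>+t. (ennreal (Gp (t + 1)) + ennreal (Gm t)) * indicator {t. Gm t < - T} t \<partial>lborel) \<le> Cminus Gp Gm b"
        by (rule int_sub_neg) (use b in auto)
      also have "\<dots> \<le> ennreal (rho * Gm b)" by (rule Cm)
      also have "\<dots> \<le> ennreal (rho * (- T))" using mult_left_mono[OF b(2), of rho] rho by (intro ennreal_leI) simp
      finally show "(\<integral>\<^sup>+t. (ennreal (Gp (t + 1)) + ennreal (Gm t)) * indicator {t. Gm t < - T} t \<partial>lborel) \<le> ennreal (rho * (- T))" .
    qed (use T rho mult_pos_neg[OF rho T] in auto)
  qed
  have cons: "driven_cost Gp Gm 1 \<le> ennreal (1 + 2 * chi)"
  proof -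
    obtain x1 where x1: "Gp x1 \<ge> 1" using a1 by blast
    have x0: "Gp (-1) < 1" using gp0 by simp
    have sub: "{t. Gp t < 1} \<subseteq> {..0}"
    proof
      fix t assume "t \<in> {t. Gp t < 1}"
      then show "t \<in> {..0}" using gp1[of t] by (cases "t > 0") auto
    qed
    show ?thesis
    proof (rule assemble[where \<Phi>="\<lambda>t. (ennreal (Gp t) + ennreal (Gm t)) * indicator {t. Gp t < 1} t"])
      show "(\<lambda>t. (ennreal (Gp t) + ennreal (Gm t)) * indicator {t. Gp t < 1} t) \<in> borel_measurable borel"
        by measurable
      show "det_cost (driven_seq Gp Gm u) 1 \<le> ennreal 1 + 2 * (\<integral>\<^sup>+n. (ennreal (Gp (real_of_int n + u)) + ennreal (Gm (real_of_int n + u))) * indicator {t. Gp t < 1} (real_of_int n + u) \<partial>count_space UNIV)" for u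
        by (rule det_pos[OF gp gm _ mp x1 x0]) simp
      have "(\<integral>\<^sup>+t. (ennreal (Gp t) + ennreal (Gm t)) * indicator {t. Gp t < 1} t \<partial>lborel) \<le> Cplus Gp Gm 0"
        by (rule int_sub_pos[OF _ _ sub]) auto
      also have "\<dots> \<le> ennreal chi" by (rule C0)
      finally show "(\<integral>\<^sup>+t. (ennreal (Gp t) + ennreal (Gm t)) * indicator {t. Gp t < 1} t \<partial>lborel) \<le> ennreal chi" .
    qed (use assms(2) in auto)
  qed
  have rob: "robust (driven_cost Gp Gm) (1 + 2 * rho)"
    unfolding robust_def
  proof (intro allI impI)
    fix T :: real assume "T \<noteq> 0"
    then consider "T > 0" | "T < 0" by linarith
    then show "driven_cost Gp Gm T \<le> ennreal ((1 + 2 * rho) * \<bar>T\<bar>)"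
    proof cases
      case 1 then show ?thesis using pos[OF 1] by (simp add: algebra_simps)
    next
      case 2 then show ?thesis using neg[OF 2] by (simp add: algebra_simps)
    qed
  qed
  show ?thesis using rob cons unfolding consistent_def by simp
qed

end
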